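(* Let $(X,d)$ be a separable complete metric space, $(\Omega,\mathsf{F},\mathbb{P})$ a probability space, $F:X\to[0,\infty]$ measurable with $\mathrm{zer}F:=\{z\in X\mid F(z)=0\}$ closed and non-empty, and $\phi:X\times X\to[0,\infty)$ a Carath\'eodory distance. Let $\tau:[0,\infty)\to[0,\infty)$ be convex and nondecreasing with $\tau(0)=0$ and $\tau(\varepsilon)>0$ for all $\varepsilon>0$, and let $D$ be a collection of $X$-valued random variables such that $\mathrm{dist}^\phi_{\mathrm{zer}F}(x)$ is integrable for all $x\in D$. If $\tau$ (restricted to $(0,\infty)$) is a modulus of $\phi$-regularity for $F$, then it is also a modulus of $\phi$-regularity for $F$ in mean w.r.t.\ $D$.
   Context: A Carath\'eodory distance is a function $\phi:X\times X\to[0,\infty)$ continuous in its left argument and Borel measurable in its right argument; $\mathrm{dist}^\phi_S(x):=\inf_{s\in S}\phi(s,x)$. A modulus of $\phi$-regularity for $F$ is a function $\tau:(0,\infty)\to(0,\infty)$ such that for all $\varepsilon>0$ and $x\in X$, $F(x)<\tau(\varepsilon)$ implies $\mathrm{dist}^\phi_{\mathrm{zer}F}(x)<\varepsilon$. A modulus of $\phi$-regularity for $F$ in mean w.r.t.\ $D$ is a function $\tau:(0,\infty)\to(0,\infty)$ such that for all $\varepsilon>0$ and $x\in D$, $\mathbb{E}[F(x)]<\tau(\varepsilon)$ implies $\mathbb{E}[\mathrm{dist}^\phi_{\mathrm{zer}F}(x)]<\varepsilon$. *)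

theory Defs
  imports "HOL-Probability.Probability"
begin

definition caratheodory_distance :: "('a::metric_space \<Rightarrow> 'a \<Rightarrow> real) \<Rightarrow> bool" where
  "caratheodory_distance \<phi> \<longleftrightarrow>
     (\<forall>s x. 0 \<le> \<phi> s x) \<and>
     (\<forall>x. continuous_on UNIV (\<lambda>s. \<phi> s x)) \<and>
     (\<forall>s. (\<lambda>x. \<phi> s x) \<in> borel_measurable borel)"

definition dist_phi :: "('a \<Rightarrow> 'a \<Rightarrow> real) \<Rightarrow> 'a set \<Rightarrow> 'a \<Rightarrow> real" where
  "dist_phi \<phi> S x = (INF s\<in>S. \<phi> s x)"

definition zer :: "('a \<Rightarrow> ennreal) \<Rightarrow> 'a set" where
  "zer F = {z. F z = 0}"

definition modulus_regularity ::
  "('a \<Rightarrow> 'a \<Rightarrow> real) \<Rightarrow> ('a \<Rightarrow> ennreal) \<Rightarrow> (real \<Rightarrow> real) \<Rightarrow> bool" where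
  "modulus_regularity \<phi> F \<tau> \<longleftrightarrow>
     (\<forall>\<epsilon>>0. \<tau> \<epsilon> > 0) \<and>
     (\<forall>\<epsilon>>0. \<forall>x. F x < ennreal (\<tau> \<epsilon>) \<longrightarrow> dist_phi \<phi> (zer F) x < \<epsilon>)"

text \<open>E[F(x)] is the nonnegative integral (F is [0,inf]-valued),
  E[dist] is the Lebesgue integral (dist is assumed integrable on D).\<close>
definition modulus_regularity_mean ::
  "'b measure \<Rightarrow> ('a \<Rightarrow> 'a \<Rightarrow> real) \<Rightarrow> ('a \<Rightarrow> ennreal) \<Rightarrow> (real \<Rightarrow> real)
     \<Rightarrow> ('b \<Rightarrow> 'a) set \<Rightarrow> bool" where
  "modulus_regularity_mean M \<phi> F \<tau> D \<longleftrightarrow>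
     (\<forall>\<epsilon>>0. \<tau> \<epsilon> > 0) \<and>
     (\<forall>\<epsilon>>0. \<forall>x\<in>D. (\<integral>\<^sup>+ \<omega>. F (x \<omega>) \<partial>M) < ennreal (\<tau> \<epsilon>) \<longrightarrow>
        (\<integral> \<omega>. dist_phi \<phi> (zer F) (x \<omega>) \<partial>M) < \<epsilon>)"

end

theory Submission
  imports Defs
begin

theorem lemma3p8:
  fixes M :: "'b measure"
    and F :: "'a::polish_space \<Rightarrow> ennreal"
    and \<phi> :: "'a \<Rightarrow> 'a \<Rightarrow> real"
    and \<tau> :: "real \<Rightarrow> real"
    and D :: "('b \<Rightarrow> 'a) set"
  assumes "prob_space M"
    and "F \<in> borel_measurable borel"
    and "closed (zer F)" and "zer F \<noteq> {}"
    and "caratheodory_distance \<phi>"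
    and "convex_on {0..} \<tau>" and "mono_on {0..} \<tau>"
    and "\<tau> 0 = 0" and "\<forall>\<epsilon>>0. \<tau> \<epsilon> > 0"
    and "\<forall>x\<in>D. x \<in> measurable M borel"
    and "\<forall>x\<in>D. integrable M (\<lambda>\<omega>. dist_phi \<phi> (zer F) (x \<omega>))"
    and "modulus_regularity \<phi> F \<tau>"
  shows "modulus_regularity_mean M \<phi> F \<tau> D"
proof -
  interpret P: prob_space M by fact
  note conv = assms(6) and mon = assms(7) and reg = assms(12)
  define d where "d = dist_phi \<phi> (zer F)"
  define q where "q = (\<lambda>t. \<tau> (max 0 t))"
  have d_nn: "0 \<le> d y" for y
  proof -
    have "\<forall>s. 0 \<le> \<phi> s y" using assms(5) unfolding caratheodory_distance_def by blast
    then show ?thesis unfolding d_def dist_phi_def using assms(4)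
      by (intro cINF_greatest) auto
  qed
  have tau_nn: "0 \<le> \<tau> t" if "0 \<le> t" for t
    using mon that assms(8) by (metis atLeast_iff mono_onD order_refl)
  have q_nn: "0 \<le> q t" for t unfolding q_def by (rule tau_nn) simp
  have pw: "ennreal (q (d y)) \<le> F y" for y
  proof (cases "d y = 0")
    case True then show ?thesis using assms(8) by (simp add: q_def)
  next
    case False
    then have pos: "d y > 0" using d_nn[of y] by simp
    have "\<not> F y < ennreal (\<tau> (d y))"
      using reg pos unfolding modulus_regularity_def d_def by auto
    then show ?thesis using d_nn[of y] by (simp add: q_def not_less)
  qed
  have qmono: "mono q"
    unfolding q_def mono_def using mon by (auto intro!: mono_onD[OF mon])
  have qconv: "convex_on UNIV q"
  proof (rule convex_onI)
    fix t x y :: real assume t: "0 < t" "t < 1"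
    have "q ((1 - t) *\<^sub>R x + t *\<^sub>R y) = \<tau> (max 0 ((1 - t) * x + t * y))" by (simp add: q_def)
    also have "\<dots> \<le> \<tau> ((1 - t) * max 0 x + t * max 0 y)"
    proof (rule mono_onD[OF mon])
      show "max 0 ((1 - t) * x + t * y) \<le> (1 - t) * max 0 x + t * max 0 y"
      proof -
        have a: "(1 - t) * x \<le> (1 - t) * max 0 x" "t * y \<le> t * max 0 y"
          using t by (auto intro!: mult_left_mono)
        have b: "0 \<le> (1 - t) * max 0 x" "0 \<le> t * max 0 y" using t by auto
        show ?thesis using a b by linarith
      qed
    qed (use t in auto)
    also have "\<dots> \<le> (1 - t) * \<tau> (max 0 x) + t * \<tau> (max 0 y)"
      using convex_onD[OF conv, of t "max 0 x" "max 0 y"] t by (simp add: algebra_simps)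
    finally show "q ((1 - t) *\<^sub>R x + t *\<^sub>R y) \<le> (1 - t) * q x + t * q y" by (simp add: q_def)
  qed simp
  show ?thesis unfolding modulus_regularity_mean_def
  proof (intro conjI allI impI ballI)
    show "\<And>\<epsilon>. \<epsilon> > 0 \<Longrightarrow> \<tau> \<epsilon> > 0" using assms(9) by blast
    fix \<epsilon> :: real and x assume e: "\<epsilon> > 0" and xD: "x \<in> D"
    assume lt: "(\<integral>\<^sup>+ \<omega>. F (x \<omega>) \<partial>M) < ennreal (\<tau> \<epsilon>)"
    have int: "integrable M (\<lambda>\<omega>. d (x \<omega>))" using assms(11) xD by (simp add: d_def)
    have meas: "(\<lambda>\<omega>. q (d (x \<omega>))) \<in> borel_measurable M"
      using borel_measurable_mono[OF qmono] borel_measurable_integrable[OF int]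
      by (rule measurable_compose[rotated])
    have nnle: "(\<integral>\<^sup>+ \<omega>. ennreal (q (d (x \<omega>))) \<partial>M) \<le> (\<integral>\<^sup>+ \<omega>. F (x \<omega>) \<partial>M)"
      by (intro nn_integral_mono pw)
    have intq: "integrable M (\<lambda>\<omega>. q (d (x \<omega>)))"
    proof (rule integrableI_bounded[OF meas])
      have "(\<integral>\<^sup>+ \<omega>. ennreal (norm (q (d (x \<omega>)))) \<partial>M) = (\<integral>\<^sup>+ \<omega>. ennreal (q (d (x \<omega>))) \<partial>M)"
        using q_nn by simp
      also have "\<dots> < \<infinity>" using less_trans[OF le_less_trans[OF nnle lt] ennreal_less_top] by simp
      finally show "(\<integral>\<^sup>+ \<omega>. ennreal (norm (q (d (x \<omega>)))) \<partial>M) < \<infinity>" .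
    qed
    have jen: "q (P.expectation (\<lambda>\<omega>. d (x \<omega>))) \<le> P.expectation (\<lambda>\<omega>. q (d (x \<omega>)))"
      by (rule P.jensens_inequality[where a=0 and b=0, OF int _ _ intq qconv]) (rule AE_I2, simp, simp)
    have Enn: "0 \<le> P.expectation (\<lambda>\<omega>. q (d (x \<omega>)))"
      by (rule integral_nonneg_AE) (simp add: q_nn)
    have "ennreal (P.expectation (\<lambda>\<omega>. q (d (x \<omega>)))) = (\<integral>\<^sup>+ \<omega>. ennreal (q (d (x \<omega>))) \<partial>M)"
      using nn_integral_eq_integral[OF intq] q_nn by simp
    also have "\<dots> < ennreal (\<tau> \<epsilon>)" using nnle lt by (meson le_less_trans)
    finally have Eq: "P.expectation (\<lambda>\<omega>. q (d (x \<omega>))) < \<tau> \<epsilon>"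
      using ennreal_less_iff[OF Enn] by simp
    show "(\<integral> \<omega>. dist_phi \<phi> (zer F) (x \<omega>) \<partial>M) < \<epsilon>"
    proof (rule ccontr)
      assume "\<not> ?thesis"
      then have ge: "\<epsilon> \<le> P.expectation (\<lambda>\<omega>. d (x \<omega>))" by (simp add: d_def)
      then have "\<tau> \<epsilon> \<le> q (P.expectation (\<lambda>\<omega>. d (x \<omega>)))"
        using e unfolding q_def by (intro mono_onD[OF mon]) auto
      then show False using jen Eq by linarith
    qed
  qed
qed

end
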